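(* Assume bifurcation assumption (B) with non-critical maximal cells, fix a root subnetwork $B$, and let $p\in C\setminus B$ be non-maximal and non-critical. Assume hypothesis (H) at $p$, and assume (L) if $\Xi_p=0$, resp. (SN) if $\Xi_p>0$. Then the $p$-th bifurcation equation has a unique solution near $0$, $$x_p(\lambda)=d_p\lambda^{2^{-\Xi_p}}+O\bigl(|\lambda|^{2^{-(\Xi_p-1)}}\bigr)\quad\text{for small }\lambda>0,$$ where $d_p\neq0$ is given by $d_p=-\bigl(\sum_{\tau\notin\mathcal L_p}a_\tau d_{\tau(p)}+\ell\bigr)/\sum_{\sigma\in\mathcal L_p}a_\sigma$ if $\Xi_p=0$, and $d_p=-\bigl(\sum_{\tau:\tau(p)\in Q_p}a_\tau d_{\tau(p)}\bigr)/\sum_{\sigma\in\mathcal L_p}a_\sigma$ if $\Xi_p>0$.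
   Context: Network: finite cells $C$, pairwise distinct maps $\Sigma=\{\sigma_1,\dots,\sigma_n\}$, $\sigma_i\colon C\to C$, $\sigma_1=\mathrm{Id}_C$; feedforward (no cycles of length $\ge 2$); $p\trianglelefteq q$ iff there is a path from $q$ to $p$ (partial order), $q\vartriangleright p$ iff $p\trianglelefteq q$, $p\neq q$; maximal cells have $\sigma(p)=p$ for all $\sigma$. $\Sigma(p)=\{\sigma(p):\sigma\in\Sigma\}$, $\Sigma^\star(p)=\Sigma(p)\setminus\{p\}$. Bifurcation setting: $V=\mathbb R$, smooth $f\colon\mathbb R^n\times\mathbb R\to\mathbb R$ with first $n$ arguments labelled by $\Sigma$, $\gamma_f(x,\lambda)_p=f(x_{\sigma_1(p)},\dots,x_{\sigma_n(p)},\lambda)$; the $p$-th bifurcation equation $\gamma_f(x,\lambda)_p=0$ is solved for $x_p$ near 0 given $x_q(\lambda)$ for $q\vartriangleright p$. $a_\sigma=\partial_\sigma f(0,0)$, $\ell=\partial_\lambda f(0,0)$. $\mathcal L_p=\{\sigma:\sigma(p)=p\}$; $p$ critical iff $\sum_{\sigma\in\mathcal L_p}a_\sigma=0$. (B): $f(0,0)=0$, some cell critical, exactly the cells sharing $\mathcal L_p$ with a critical cell are critical. Root subnetwork: a subnetwork ($\sigma(B)\subset B$ for all $\sigma$) $\emptyset\ne B\subsetneq C$ containing all maximal cells such that every $p\notin B$ with all $q\vartriangleright p$ in $B$ is critical. Hypothesis (H) at $p$: for all $q\vartriangleright p$ and small $\lambda>0$, $x_q(\lambda)=d_q\lambda^{2^{-\xi_q}}+O(|\lambda|^{2^{-(\xi_q-1)}})$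 with $d_q\ne0$ and integers $\xi_q\ge0$. Then $\Xi_p=\max_{q\in\Sigma^\star(p)}\xi_q$ and $Q_p=\{q\in\Sigma^\star(p):\xi_q=\Xi_p\}$. Condition (L): $\Xi_p=0$ and $\sum_{\tau\notin\mathcal L_p}a_\tau d_{\tau(p)}+\ell\ne0$. Condition (SN): $\Xi_p>0$ and $\sum_{\tau:\tau(p)\in Q_p}a_\tau d_{\tau(p)}\ne0$. *)

theory Defs
  imports "HOL-Analysis.Analysis" "HOL-Library.Landau_Symbols"
begin

text \<open>Iterated partial derivatives along basis directions (innermost derivative
  is the last list element).\<close>
fun pderivs :: "('a::euclidean_space \<Rightarrow> real) \<Rightarrow> 'a list \<Rightarrow> 'a \<Rightarrow> real" where
  "pderivs g [] = g"
| "pderivs g (b # bs) = (\<lambda>x. deriv (\<lambda>t. pderivs g bs (x + t *\<^sub>R b)) 0)"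

definition smooth_fun :: "('a::euclidean_space \<Rightarrow> real) \<Rightarrow> bool" where
  "smooth_fun g \<longleftrightarrow> continuous_on UNIV g \<and>
     (\<forall>bs b x. set bs \<subseteq> Basis \<longrightarrow> b \<in> Basis \<longrightarrow>
        ((\<lambda>t. pderivs g bs (x + t *\<^sub>R b)) has_real_derivative pderivs g (b # bs) x) (at 0)) \<and>
     (\<forall>bs. set bs \<subseteq> Basis \<longrightarrow> continuous_on UNIV (pderivs g bs))"

text \<open>Cells form the finite type \<open>'c\<close>; the maps of \<Sigma> are indexed by the finite
  type \<open>'s\<close> via \<open>sig\<close>.\<close>

definition edges :: "('s \<Rightarrow> 'c \<Rightarrow> 'c) \<Rightarrow> ('c \<times> 'c) set" where
  "edges sig = {(sig s p, p) | s p. sig s p \<noteq> p}"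

definition network :: "('s::finite \<Rightarrow> 'c::finite \<Rightarrow> 'c) \<Rightarrow> bool" where
  "network sig \<longleftrightarrow> inj sig \<and> (\<exists>s. sig s = id)"

text \<open>Feedforward: no cycles of length at least 2 (self-loops are allowed).\<close>
definition feedforward :: "('s \<Rightarrow> 'c \<Rightarrow> 'c) \<Rightarrow> bool" where
  "feedforward sig \<longleftrightarrow> acyclic (edges sig)"

text \<open>\<open>below sig p q\<close>: p \<unlhd> q, i.e. there is a path from q to p.\<close>
definition below :: "('s \<Rightarrow> 'c \<Rightarrow> 'c) \<Rightarrow> 'c \<Rightarrow> 'c \<Rightarrow> bool" where
  "below sig p q \<longleftrightarrow> (q, p) \<in> (edges sig)\<^sup>*"

definition above :: "('s \<Rightarrow> 'c \<Rightarrow> 'c) \<Rightarrow> 'c \<Rightarrow> 'c \<Rightarrow> bool" where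
  "above sig q p \<longleftrightarrow> below sig p q \<and> p \<noteq> q"

definition maximal :: "('s \<Rightarrow> 'c \<Rightarrow> 'c) \<Rightarrow> 'c \<Rightarrow> bool" where
  "maximal sig p \<longleftrightarrow> (\<nexists>q. above sig q p)"

definition Sig_img :: "('s \<Rightarrow> 'c \<Rightarrow> 'c) \<Rightarrow> 'c \<Rightarrow> 'c set" where
  "Sig_img sig p = {sig s p | s. True}"

definition Sig_star :: "('s \<Rightarrow> 'c \<Rightarrow> 'c) \<Rightarrow> 'c \<Rightarrow> 'c set" where
  "Sig_star sig p = Sig_img sig p - {p}"

definition Lp :: "('s \<Rightarrow> 'c \<Rightarrow> 'c) \<Rightarrow> 'c \<Rightarrow> 's set" where
  "Lp sig p = {s. sig s p = p}"

definition subnetwork :: "('s \<Rightarrow> 'c \<Rightarrow> 'c) \<Rightarrow> 'c set \<Rightarrow> bool" where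
  "subnetwork sig B \<longleftrightarrow> (\<forall>s. sig s ` B \<subseteq> B)"

definition gamma :: "('s \<Rightarrow> 'c \<Rightarrow> 'c) \<Rightarrow> (real^'s \<Rightarrow> real \<Rightarrow> real) \<Rightarrow> ('c \<Rightarrow> real) \<Rightarrow> real \<Rightarrow> 'c \<Rightarrow> real" where
  "gamma sig f x lam p = f (\<chi> s. x (sig s p)) lam"

definition acoef :: "(real^'s \<Rightarrow> real \<Rightarrow> real) \<Rightarrow> 's \<Rightarrow> real" where
  "acoef f s = deriv (\<lambda>t. f (axis s t) 0) 0"

definition lcoef :: "(real^'s \<Rightarrow> real \<Rightarrow> real) \<Rightarrow> real" where
  "lcoef f = deriv (\<lambda>t. f 0 t) 0"

definition critical :: "('s \<Rightarrow> 'c \<Rightarrow> 'c) \<Rightarrow> (real^'s \<Rightarrow> real \<Rightarrow> real) \<Rightarrow> 'c \<Rightarrow> bool" where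
  "critical sig f p \<longleftrightarrow> (\<Sum>s\<in>Lp sig p. acoef f s) = 0"

definition assumption_B :: "('s \<Rightarrow> 'c \<Rightarrow> 'c) \<Rightarrow> (real^'s \<Rightarrow> real \<Rightarrow> real) \<Rightarrow> bool" where
  "assumption_B sig f \<longleftrightarrow> f 0 0 = 0 \<and> (\<exists>p. critical sig f p) \<and>
     (\<forall>q. critical sig f q \<longleftrightarrow> (\<exists>p. critical sig f p \<and> Lp sig q = Lp sig p))"

definition root_subnetwork :: "('s \<Rightarrow> 'c \<Rightarrow> 'c) \<Rightarrow> (real^'s \<Rightarrow> real \<Rightarrow> real) \<Rightarrow> 'c set \<Rightarrow> bool" where
  "root_subnetwork sig f B \<longleftrightarrow> subnetwork sig B \<and> B \<noteq> {} \<and> B \<noteq> UNIV \<and>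
     (\<forall>p. maximal sig p \<longrightarrow> p \<in> B) \<and>
     (\<forall>p. p \<notin> B \<longrightarrow> (\<forall>q. above sig q p \<longrightarrow> q \<in> B) \<longrightarrow> critical sig f p)"

definition has_expansion :: "(real \<Rightarrow> real) \<Rightarrow> real \<Rightarrow> nat \<Rightarrow> bool" where
  "has_expansion x d \<xi> \<longleftrightarrow>
     (\<lambda>lam. x lam - d * lam powr (2 powr (- real \<xi>)))
       \<in> O[at_right 0](\<lambda>lam. \<bar>lam\<bar> powr (2 powr (- (real \<xi> - 1))))"

definition hyp_H :: "('s \<Rightarrow> 'c \<Rightarrow> 'c) \<Rightarrow> 'c \<Rightarrow> ('c \<Rightarrow> real \<Rightarrow> real) \<Rightarrow> ('c \<Rightarrow> real) \<Rightarrow> ('c \<Rightarrow> nat) \<Rightarrow> bool" where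
  "hyp_H sig p x d \<xi> \<longleftrightarrow> (\<forall>q. above sig q p \<longrightarrow> d q \<noteq> 0 \<and> has_expansion (x q) (d q) (\<xi> q))"

definition Xi :: "('s \<Rightarrow> 'c \<Rightarrow> 'c) \<Rightarrow> ('c \<Rightarrow> nat) \<Rightarrow> 'c \<Rightarrow> nat" where
  "Xi sig \<xi> p = Max (\<xi> ` Sig_star sig p)"

definition Qset :: "('s \<Rightarrow> 'c \<Rightarrow> 'c) \<Rightarrow> ('c \<Rightarrow> nat) \<Rightarrow> 'c \<Rightarrow> 'c set" where
  "Qset sig \<xi> p = {q \<in> Sig_star sig p. \<xi> q = Xi sig \<xi> p}"

definition cond_L :: "('s \<Rightarrow> 'c \<Rightarrow> 'c) \<Rightarrow> (real^'s \<Rightarrow> real \<Rightarrow> real) \<Rightarrow> ('c \<Rightarrow> real) \<Rightarrow> ('c \<Rightarrow> nat) \<Rightarrow> 'c \<Rightarrow> bool" where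
  "cond_L sig f d \<xi> p \<longleftrightarrow> Xi sig \<xi> p = 0 \<and>
     (\<Sum>t\<in>- Lp sig p. acoef f t * d (sig t p)) + lcoef f \<noteq> 0"

definition cond_SN :: "('s \<Rightarrow> 'c \<Rightarrow> 'c) \<Rightarrow> (real^'s \<Rightarrow> real \<Rightarrow> real) \<Rightarrow> ('c \<Rightarrow> real) \<Rightarrow> ('c \<Rightarrow> nat) \<Rightarrow> 'c \<Rightarrow> bool" where
  "cond_SN sig f d \<xi> p \<longleftrightarrow> Xi sig \<xi> p > 0 \<and>
     (\<Sum>t\<in>{t. sig t p \<in> Qset sig \<xi> p}. acoef f t * d (sig t p)) \<noteq> 0"

end

theory Submission
  imports Defs
begin


definition boxS :: "real \<Rightarrow> 'a::euclidean_space set" where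
  "boxS \<rho> = {x. \<forall>b\<in>Basis. \<bar>x \<bullet> b\<bar> \<le> \<rho>}"

lemma one_step:
  fixes h :: "'a::euclidean_space \<Rightarrow> real"
  assumes D: "\<And>x. ((\<lambda>t. h (x + t *\<^sub>R b)) has_real_derivative Q x) (at 0)"
    and M: "\<And>t. 0 \<le> t \<Longrightarrow> t \<le> 1 \<Longrightarrow> \<bar>Q (v + (t * \<delta>) *\<^sub>R b)\<bar> \<le> M"
  shows "\<bar>h (v + \<delta> *\<^sub>R b) - h v\<bar> \<le> M * \<bar>\<delta>\<bar>"
proof -
  define \<phi> where "\<phi> = (\<lambda>t. h (v + (t * \<delta>) *\<^sub>R b))"
  have der: "(\<phi> has_real_derivative (\<delta> * Q (v + (t * \<delta>) *\<^sub>R b))) (at t)" for t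
  proof -
    have "((\<lambda>s. h ((v + (t * \<delta>) *\<^sub>R b) + s *\<^sub>R b)) has_real_derivative Q (v + (t * \<delta>) *\<^sub>R b)) (at 0)"
      using D by blast
    hence "((\<lambda>s. h ((v + (t * \<delta>) *\<^sub>R b) + s *\<^sub>R b)) has_real_derivative Q (v + (t * \<delta>) *\<^sub>R b)) (at ((t*\<delta> - t*\<delta>)))"
      by simp
    hence "((\<lambda>s. h ((v + (t * \<delta>) *\<^sub>R b) + (s - t * \<delta>) *\<^sub>R b)) has_real_derivative Q (v + (t * \<delta>) *\<^sub>R b)) (at (t*\<delta>))"
      using DERIV_shift[where z="- (t*\<delta>)" and x="t*\<delta>" and f="\<lambda>s. h ((v + (t * \<delta>) *\<^sub>R b) + s *\<^sub>R b)"]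
      by simp
    moreover have "(\<lambda>s. h ((v + (t * \<delta>) *\<^sub>R b) + (s - t * \<delta>) *\<^sub>R b)) = (\<lambda>s. h (v + s *\<^sub>R b))"
      by (auto simp: algebra_simps)
    ultimately have "((\<lambda>s. h (v + s *\<^sub>R b)) has_real_derivative Q (v + (t * \<delta>) *\<^sub>R b)) (at (t*\<delta>))"
      by simp
    moreover have "((\<lambda>t. t * \<delta>) has_real_derivative \<delta>) (at t)"
      by (auto intro!: derivative_eq_intros)
    ultimately have "((\<lambda>t. h (v + (t * \<delta>) *\<^sub>R b)) has_real_derivative (Q (v + (t * \<delta>) *\<^sub>R b) * \<delta>)) (at t)"
      by (rule DERIV_chain2[where g="\<lambda>t. t * \<delta>" and f="\<lambda>s. h (v + s *\<^sub>R b)"])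
    then show ?thesis unfolding \<phi>_def by (simp add: mult.commute)
  qed
  obtain z where z: "0 < z" "z < 1" "\<phi> 1 - \<phi> 0 = (1 - 0) * (\<delta> * Q (v + (z * \<delta>) *\<^sub>R b))"
    using MVT2[of 0 1 \<phi>, OF _ der] by auto
  have "\<bar>\<phi> 1 - \<phi> 0\<bar> = \<bar>\<delta>\<bar> * \<bar>Q (v + (z * \<delta>) *\<^sub>R b)\<bar>" using z by (simp add: abs_mult)
  also have "\<dots> \<le> \<bar>\<delta>\<bar> * M" using M[of z] z by (simp add: mult_left_mono)
  finally show ?thesis unfolding \<phi>_def by (simp add: mult.commute)
qed

lemma coord_bound_aux:
  fixes h :: "'a::euclidean_space \<Rightarrow> real"
  assumes D: "\<And>b x. b \<in> Basis \<Longrightarrow> ((\<lambda>t. h (x + t *\<^sub>R b)) has_real_derivative Q b x) (at 0)"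
    and M: "\<And>b x. b \<in> Basis \<Longrightarrow> x \<in> boxS \<rho> \<Longrightarrow> \<bar>Q b x\<bar> \<le> M"
    and F: "F \<subseteq> Basis"
  shows "\<forall>u v. u \<in> boxS \<rho> \<longrightarrow> v \<in> boxS \<rho> \<longrightarrow> (\<forall>b\<in>Basis - F. u \<bullet> b = v \<bullet> b) \<longrightarrow>
     \<bar>h u - h v\<bar> \<le> M * (\<Sum>b\<in>F. \<bar>u \<bullet> b - v \<bullet> b\<bar>)"
proof -
  have fin: "finite F" by (rule finite_subset[OF F finite_Basis])
  show ?thesis using fin F
  proof (induction F rule: finite_induct)
    case empty
    show ?case
    proof (intro allI impI)
      fix u v :: 'a assume "\<forall>b\<in>Basis - {}. u \<bullet> b = v \<bullet> b"
      hence "u = v" by (metis Diff_empty euclidean_eqI)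
      thus "\<bar>h u - h v\<bar> \<le> M * (\<Sum>b\<in>{}. \<bar>u \<bullet> b - v \<bullet> b\<bar>)" by simp
    qed
  next
    case (insert b F)
    have bB: "b \<in> Basis" and FB: "F \<subseteq> Basis" using insert.prems by auto
    show ?case
    proof (intro allI impI)
      fix u v :: 'a
      assume u: "u \<in> boxS \<rho>" and v: "v \<in> boxS \<rho>" and agree: "\<forall>c\<in>Basis - insert b F. u \<bullet> c = v \<bullet> c"
      define \<delta> where "\<delta> = (u - v) \<bullet> b"
      define w where "w = v + \<delta> *\<^sub>R b"
      have wc: "w \<bullet> c = (if c = b then u \<bullet> b else v \<bullet> c)" if "c \<in> Basis" for c
        using that bB by (auto simp: w_def \<delta>_def inner_add_left inner_diff_left inner_Basis)
      have w: "w \<in> boxS \<rho>" using u v wc unfolding boxS_def by auto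
      have agree2: "\<forall>c\<in>Basis - F. u \<bullet> c = w \<bullet> c" using agree wc by auto
      have IH: "\<bar>h u - h w\<bar> \<le> M * (\<Sum>c\<in>F. \<bar>u \<bullet> c - w \<bullet> c\<bar>)"
        using insert.IH[OF FB, rule_format, OF u w agree2[rule_format]] .
      have sumeq: "(\<Sum>c\<in>F. \<bar>u \<bullet> c - w \<bullet> c\<bar>) = (\<Sum>c\<in>F. \<bar>u \<bullet> c - v \<bullet> c\<bar>)"
        using FB insert.hyps wc by (intro sum.cong) auto
      have step: "\<bar>h w - h v\<bar> \<le> M * \<bar>\<delta>\<bar>"
        unfolding w_def
      proof (rule one_step[where Q="Q b"])
        show "((\<lambda>t. h (x + t *\<^sub>R b)) has_real_derivative Q b x) (at 0)" for x by (rule D[OF bB])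
        fix t :: real assume t: "0 \<le> t" "t \<le> 1"
        have "v + (t * \<delta>) *\<^sub>R b \<in> boxS \<rho>"
          unfolding boxS_def
        proof (intro CollectI ballI)
          fix c :: 'a assume c: "c \<in> Basis"
          show "\<bar>(v + (t * \<delta>) *\<^sub>R b) \<bullet> c\<bar> \<le> \<rho>"
          proof (cases "c = b")
            case True
            have e: "(v + (t * \<delta>) *\<^sub>R b) \<bullet> c = (1 - t) * (v \<bullet> b) + t * (u \<bullet> b)"
              using True bB by (simp add: inner_add_left \<delta>_def inner_diff_left algebra_simps)
            have "\<bar>v \<bullet> b\<bar> \<le> \<rho>" "\<bar>u \<bullet> b\<bar> \<le> \<rho>" using u v bB unfolding boxS_def by auto
            have "\<bar>(1 - t) * (v \<bullet> b) + t * (u \<bullet> b)\<bar> \<le> \<bar>(1 - t) * (v \<bullet> b)\<bar> + \<bar>t * (u \<bullet> b)\<bar>"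
              by (rule abs_triangle_ineq)
            also have "\<dots> = (1 - t) * \<bar>v \<bullet> b\<bar> + t * \<bar>u \<bullet> b\<bar>" using t by (simp add: abs_mult)
            also have "\<dots> \<le> (1 - t) * \<rho> + t * \<rho>"
              using t \<open>\<bar>v \<bullet> b\<bar> \<le> \<rho>\<close> \<open>\<bar>u \<bullet> b\<bar> \<le> \<rho>\<close> by (intro add_mono mult_left_mono) auto
            finally have "\<bar>(1 - t) * (v \<bullet> b) + t * (u \<bullet> b)\<bar> \<le> (1 - t) * \<rho> + t * \<rho>" .
            moreover have "(1 - t) * \<rho> + t * \<rho> = \<rho>" by (simp add: algebra_simps)
            ultimately show ?thesis using e by linarith
          next
            case False
            hence "(v + (t * \<delta>) *\<^sub>R b) \<bullet> c = v \<bullet> c" using c bB by (simp add: inner_add_left inner_Basis)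
            thus ?thesis using v c unfolding boxS_def by auto
          qed
        qed
        thus "\<bar>Q b (v + (t * \<delta>) *\<^sub>R b)\<bar> \<le> M" by (rule M[OF bB])
      qed
      have "\<bar>\<delta>\<bar> = \<bar>u \<bullet> b - v \<bullet> b\<bar>" by (simp add: \<delta>_def inner_diff_left)
      hence step2: "\<bar>h w - h v\<bar> \<le> M * \<bar>u \<bullet> b - v \<bullet> b\<bar>" using step by simp
      have tri: "\<bar>h u - h v\<bar> \<le> \<bar>h u - h w\<bar> + \<bar>h w - h v\<bar>"
        using abs_triangle_ineq[of "h u - h w" "h w - h v"] by simp
      have "\<bar>h u - h v\<bar> \<le> M * (\<Sum>c\<in>F. \<bar>u \<bullet> c - v \<bullet> c\<bar>) + M * \<bar>u \<bullet> b - v \<bullet> b\<bar>"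
        using IH[unfolded sumeq] step2 tri by linarith
      moreover have "(\<Sum>c\<in>insert b F. \<bar>u \<bullet> c - v \<bullet> c\<bar>) = \<bar>u \<bullet> b - v \<bullet> b\<bar> + (\<Sum>c\<in>F. \<bar>u \<bullet> c - v \<bullet> c\<bar>)"
        by (rule sum.insert[OF insert.hyps])
      ultimately show "\<bar>h u - h v\<bar> \<le> M * (\<Sum>c\<in>insert b F. \<bar>u \<bullet> c - v \<bullet> c\<bar>)"
        by (simp add: distrib_left)
    qed
  qed
qed

lemma coord_bound:
  fixes h :: "'a::euclidean_space \<Rightarrow> real"
  assumes D: "\<And>b x. b \<in> Basis \<Longrightarrow> ((\<lambda>t. h (x + t *\<^sub>R b)) has_real_derivative Q b x) (at 0)"
    and M: "\<And>b x. b \<in> Basis \<Longrightarrow> x \<in> boxS \<rho> \<Longrightarrow> \<bar>Q b x\<bar> \<le> M"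
    and "u \<in> boxS \<rho>" "v \<in> boxS \<rho>"
  shows "\<bar>h u - h v\<bar> \<le> M * (\<Sum>b\<in>Basis. \<bar>u \<bullet> b - v \<bullet> b\<bar>)"
proof -
  have X: "\<forall>u v. u \<in> boxS \<rho> \<longrightarrow> v \<in> boxS \<rho> \<longrightarrow> (\<forall>b\<in>Basis - Basis. u \<bullet> b = v \<bullet> b) \<longrightarrow>
     \<bar>h u - h v\<bar> \<le> M * (\<Sum>b\<in>Basis. \<bar>u \<bullet> b - v \<bullet> b\<bar>)"
    using D M by (rule coord_bound_aux) (simp_all add: subset_refl)
  have "\<forall>b\<in>Basis - Basis. u \<bullet> b = v \<bullet> b" by simp
  from X[rule_format, OF assms(3) assms(4)] show ?thesis by simp
qed


definition lin :: "('a::euclidean_space \<Rightarrow> real) \<Rightarrow> 'a \<Rightarrow> real" where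
  "lin g x = (\<Sum>b\<in>Basis. (x \<bullet> b) * pderivs g [b] 0)"

lemma boxS_compact: "compact (boxS r :: 'a::euclidean_space set)"
proof -
  have "boxS r = cbox (- (r *\<^sub>R One)) (r *\<^sub>R (One :: 'a))"
    unfolding boxS_def cbox_def by (auto simp: inner_minus_left abs_le_iff)
  thus ?thesis by simp
qed

lemma boxS_mono: "\<rho> \<le> r \<Longrightarrow> x \<in> boxS \<rho> \<Longrightarrow> x \<in> boxS r"
  unfolding boxS_def by fastforce

lemma boxS_sum: "x \<in> boxS \<rho> \<Longrightarrow> (\<Sum>b\<in>Basis. \<bar>x \<bullet> b\<bar>) \<le> real DIM('a) * \<rho>" for x :: "'a::euclidean_space"
proof -
  assume "x \<in> boxS \<rho>"
  hence "(\<Sum>b\<in>Basis. \<bar>x \<bullet> b\<bar>) \<le> (\<Sum>b\<in>(Basis::'a set). \<rho>)"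
    unfolding boxS_def by (intro sum_mono) auto
  thus ?thesis by simp
qed

lemma lin_shift: "b \<in> Basis \<Longrightarrow> lin g (x + t *\<^sub>R b) = lin g x + t * pderivs g [b] 0"
  for g :: "'a::euclidean_space \<Rightarrow> real"
proof -
  assume b: "b \<in> Basis"
  have "lin g (x + t *\<^sub>R b) = (\<Sum>c\<in>Basis. (x \<bullet> c) * pderivs g [c] 0 + t * ((b \<bullet> c) * pderivs g [c] 0))"
    unfolding lin_def by (intro sum.cong) (auto simp: inner_add_left algebra_simps)
  also have "\<dots> = lin g x + t * (\<Sum>c\<in>Basis. (b \<bullet> c) * pderivs g [c] 0)"
    unfolding lin_def by (simp add: sum.distrib sum_distrib_left)
  also have "(\<Sum>c\<in>Basis. (b \<bullet> c) * pderivs g [c] 0) = pderivs g [b] 0"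
  proof -
    have "(\<Sum>c\<in>Basis. (b \<bullet> c) * pderivs g [c] 0) = (\<Sum>c\<in>Basis. if c = b then pderivs g [c] 0 else 0)"
      using b by (intro sum.cong) (auto simp: inner_Basis simp del: pderivs.simps)
    thus ?thesis using b by (simp del: pderivs.simps)
  qed
  finally show ?thesis .
qed

lemma strong_diff:
  fixes g :: "'a::euclidean_space \<Rightarrow> real"
  assumes sm: "smooth_fun g"
  obtains K where "K \<ge> 0" and "\<And>\<rho> u v. 0 \<le> \<rho> \<Longrightarrow> \<rho> \<le> 1 \<Longrightarrow> u \<in> boxS \<rho> \<Longrightarrow> v \<in> boxS \<rho> \<Longrightarrow>
     \<bar>(g u - lin g u) - (g v - lin g v)\<bar> \<le> K * \<rho> * (\<Sum>b\<in>Basis. \<bar>u \<bullet> b - v \<bullet> b\<bar>)"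
proof -
  have D1: "((\<lambda>t. g (x + t *\<^sub>R b)) has_real_derivative pderivs g [b] x) (at 0)" if "b \<in> Basis" for b x
    using sm that unfolding smooth_fun_def
    by (metis empty_subsetI empty_set pderivs.simps(1))
  have D2: "((\<lambda>t. pderivs g [b] (x + t *\<^sub>R b')) has_real_derivative pderivs g [b', b] x) (at 0)"
    if "b \<in> Basis" "b' \<in> Basis" for b b' x
  proof -
    have "set [b] \<subseteq> Basis" using that by simp
    thus ?thesis using sm that unfolding smooth_fun_def by blast
  qed
  have C2: "continuous_on UNIV (pderivs g [b', b])" if "b \<in> Basis" "b' \<in> Basis" for b b'
  proof -
    have "set [b', b] \<subseteq> Basis" using that by simp
    thus ?thesis using sm unfolding smooth_fun_def by blast
  qed
  define \<Phi> where "\<Phi> = (\<lambda>x. \<Sum>b\<in>(Basis::'a set). \<Sum>b'\<in>(Basis::'a set). \<bar>pderivs g [b', b] x\<bar>)"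
  have "continuous_on (boxS 1) \<Phi>"
    unfolding \<Phi>_def
    by (intro continuous_intros continuous_on_subset[OF C2]) auto
  then obtain M2 where M2: "M2 \<ge> 0" "\<And>x. x \<in> boxS 1 \<Longrightarrow> norm (\<Phi> x) \<le> M2"
    using continuous_on_compact_bound[OF boxS_compact] by metis
  have M2b: "\<bar>pderivs g [b', b] x\<bar> \<le> M2" if "b \<in> Basis" "b' \<in> Basis" "x \<in> boxS 1" for b b' x
  proof -
    have "\<bar>pderivs g [b', b] x\<bar> \<le> (\<Sum>b'\<in>(Basis::'a set). \<bar>pderivs g [b', b] x\<bar>)"
      using that by (intro member_le_sum) auto
    also have "\<dots> \<le> \<Phi> x" unfolding \<Phi>_def
      using that by (intro member_le_sum[where f="\<lambda>b. \<Sum>b'\<in>Basis. \<bar>pderivs g [b', b] x\<bar>"]) (auto intro: sum_nonneg)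
    also have "\<dots> \<le> M2" using M2(2)[OF that(3)] by simp
    finally show ?thesis .
  qed
  have zero: "(0::'a) \<in> boxS 1" unfolding boxS_def by simp
  have P: "\<bar>pderivs g [b] x - pderivs g [b] 0\<bar> \<le> M2 * (\<Sum>c\<in>Basis. \<bar>x \<bullet> c\<bar>)"
    if b: "b \<in> Basis" and x: "x \<in> boxS 1" for b x
  proof -
    have "\<bar>pderivs g [b] x - pderivs g [b] 0\<bar> \<le> M2 * (\<Sum>c\<in>Basis. \<bar>x \<bullet> c - 0 \<bullet> c\<bar>)"
    proof (rule coord_bound[where Q="\<lambda>b' y. pderivs g [b', b] y" and \<rho>=1])
      show "((\<lambda>t. pderivs g [b] (y + t *\<^sub>R b')) has_real_derivative pderivs g [b', b] y) (at 0)"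
        if "b' \<in> Basis" for b' y using D2[OF b that] .
      show "\<bar>pderivs g [b', b] y\<bar> \<le> M2" if "b' \<in> Basis" "y \<in> boxS 1" for b' y
        using M2b[OF b that] .
    qed (use x zero in auto)
    thus ?thesis by simp
  qed
  define K where "K = M2 * real DIM('a)"
  have "K \<ge> 0" unfolding K_def using M2 by simp
  moreover have "\<bar>(g u - lin g u) - (g v - lin g v)\<bar> \<le> K * \<rho> * (\<Sum>b\<in>Basis. \<bar>u \<bullet> b - v \<bullet> b\<bar>)"
    if r: "0 \<le> \<rho>" "\<rho> \<le> 1" and u: "u \<in> boxS \<rho>" and v: "v \<in> boxS \<rho>" for \<rho> u v
  proof (rule coord_bound[where Q="\<lambda>b y. pderivs g [b] y - pderivs g [b] 0" and h="\<lambda>y. g y - lin g y"])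
    show "((\<lambda>t. g (y + t *\<^sub>R b) - lin g (y + t *\<^sub>R b)) has_real_derivative
        pderivs g [b] y - pderivs g [b] 0) (at 0)" if "b \<in> Basis" for b y
    proof -
      have a: "((\<lambda>t. g (y + t *\<^sub>R b)) has_real_derivative pderivs g [b] y) (at 0)" by (rule D1[OF that])
      have c: "((\<lambda>t. lin g y + t * pderivs g [b] 0) has_real_derivative pderivs g [b] 0) (at 0)"
        by (auto intro!: derivative_eq_intros)
      show ?thesis unfolding lin_shift[OF that] by (rule DERIV_diff[OF a c])
    qed
    show "\<bar>pderivs g [b] y - pderivs g [b] 0\<bar> \<le> K * \<rho>" if "b \<in> Basis" "y \<in> boxS \<rho>" for b y
    proof -
      have y1: "y \<in> boxS 1" using boxS_mono[OF r(2) that(2)] .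
      have "\<bar>pderivs g [b] y - pderivs g [b] 0\<bar> \<le> M2 * (\<Sum>c\<in>Basis. \<bar>y \<bullet> c\<bar>)" using P[OF that(1) y1] .
      also have "\<dots> \<le> M2 * (real DIM('a) * \<rho>)" by (rule mult_left_mono[OF boxS_sum[OF that(2)] M2(1)])
      finally show ?thesis unfolding K_def by (simp add: mult.assoc)
    qed
  qed (use u v in auto)
  ultimately show ?thesis using that by blast
qed


lemma sum_Basis_prod_real:
  fixes F :: "('a::euclidean_space \<times> 'b::euclidean_space) \<Rightarrow> real"
  shows "sum F Basis = sum (\<lambda>i. F (i, 0)) Basis + sum (\<lambda>i. F (0, i)) Basis"
proof -
  have "inj_on (\<lambda>u. (u::'a, 0::'b)) Basis" "inj_on (\<lambda>u. (0::'a, u::'b)) Basis"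
    by (auto intro!: inj_onI Pair_inject)
  thus ?thesis
    unfolding Basis_prod_def
    by (subst sum.union_disjoint) (auto simp: Basis_prod_def sum.reindex)
qed

lemma Basis_vec_real: "(Basis :: (real^'n::finite) set) = range (\<lambda>i. axis i 1)"
  unfolding Basis_vec_def by auto

lemma sum_Basis_vec_real:
  fixes G :: "real^'n::finite \<Rightarrow> real"
  shows "sum G Basis = (\<Sum>i\<in>UNIV. G (axis i 1))"
proof -
  have "inj (\<lambda>i::'n::finite. axis i (1::real))" by (auto intro!: injI simp: axis_eq_axis)
  thus ?thesis unfolding Basis_vec_real by (simp add: sum.reindex)
qed

lemma sum_Basis_V:
  fixes F :: "((real^'n::finite) \<times> real) \<Rightarrow> real"
  shows "sum F Basis = (\<Sum>i\<in>UNIV. F (axis i 1, 0)) + F (0, 1)"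
  unfolding sum_Basis_prod_real sum_Basis_vec_real by simp

lemma inner_V1: "(z :: (real^'n::finite) \<times> real) \<bullet> (axis i 1, 0) = fst z $ i"
  by (simp add: inner_prod_def inner_axis)

lemma inner_V2: "(z :: (real^'n::finite) \<times> real) \<bullet> (0, 1) = snd z"
  by (simp add: inner_prod_def)

lemma boxS_V: "((z :: (real^'n::finite) \<times> real) \<in> boxS \<rho>) \<longleftrightarrow> (\<forall>i. \<bar>fst z $ i\<bar> \<le> \<rho>) \<and> \<bar>snd z\<bar> \<le> \<rho>"
  unfolding boxS_def Basis_prod_def Basis_vec_real by (auto simp: inner_V1 inner_V2)

lemma sum_abs_V: "(\<Sum>b\<in>Basis. \<bar>(z :: (real^'n::finite) \<times> real) \<bullet> b\<bar>) = (\<Sum>i\<in>UNIV. \<bar>fst z $ i\<bar>) + \<bar>snd z\<bar>"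
  unfolding sum_Basis_V by (simp add: inner_V1 inner_V2)

lemma scaleR_axis_1: "t *\<^sub>R axis i (1::real) = axis i t"
  by (simp add: axis_def vec_eq_iff)

lemma lin_V:
  fixes f :: "real^'s \<Rightarrow> real \<Rightarrow> real"
  shows "lin (\<lambda>z. f (fst z) (snd z)) z = (\<Sum>i\<in>UNIV. fst z $ i * acoef f i) + snd z * lcoef f"
proof -
  have a: "pderivs (\<lambda>z. f (fst z) (snd z)) [(axis i 1, 0)] 0 = acoef f i" for i
    by (simp add: acoef_def scaleR_axis_1)
  have l: "pderivs (\<lambda>z. f (fst z) (snd z)) [(0, 1)] 0 = lcoef f"
    by (simp add: lcoef_def)
  show ?thesis unfolding lin_def sum_Basis_V by (simp only: inner_V1 inner_V2 a l)
qed



lemma powr_small_ev: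
  assumes "h > 0" "\<eta> > 0"
  shows "eventually (\<lambda>lam::real. lam powr h < \<eta>) (at_right 0)"
proof -
  have "((\<lambda>lam::real. lam powr h) \<longlongrightarrow> 0 powr h) (at_right 0)"
    using assms by (intro tendsto_intros) (auto simp: eventually_at_right_field intro: exI[of _ 1])
  hence "((\<lambda>lam::real. lam powr h) \<longlongrightarrow> 0) (at_right 0)" using assms by simp
  thus ?thesis using assms order_tendstoD(2) by blast
qed

lemma core:
  fixes \<phi> :: "real \<Rightarrow> real \<Rightarrow> real" and c m :: "real \<Rightarrow> real"
  assumes A: "A \<noteq> 0" and K1: "K1 \<ge> 0" and K0: "K0 \<ge> 0" and h: "h > 0"
    and H2: "\<And>lam \<rho> y1 y2. 0 < lam \<Longrightarrow> m lam \<le> \<rho> \<Longrightarrow> \<rho> \<le> 1 \<Longrightarrow> \<bar>y1\<bar> \<le> \<rho> \<Longrightarrow> \<bar>y2\<bar> \<le> \<rho> \<Longrightarrow>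
        \<bar>\<phi> lam y1 - \<phi> lam y2 - A * (y1 - y2)\<bar> \<le> K1 * \<rho> * \<bar>y1 - y2\<bar>"
    and H3: "\<And>lam. 0 < lam \<Longrightarrow> m lam \<le> 1 \<Longrightarrow> \<bar>\<phi> lam 0 - c lam\<bar> \<le> K0 * (m lam)\<^sup>2"
    and H4: "\<And>lam. 0 < lam \<Longrightarrow> continuous_on UNIV (\<phi> lam)"
    and H5: "eventually (\<lambda>lam. 0 \<le> m lam \<and> m lam \<le> Cm * lam powr h \<and>
                 \<bar>c lam - D * lam powr h\<bar> \<le> Cc * lam powr (2 * h)) (at_right 0)"
  shows "\<exists>\<epsilon>>0. \<exists>\<delta>>0. \<exists>xp :: real \<Rightarrow> real.
           (\<forall>lam. 0 < lam \<and> lam < \<delta> \<longrightarrow> \<bar>xp lam\<bar> < \<epsilon> \<and> \<phi> lam (xp lam) = 0 \<and>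
              (\<forall>y. \<bar>y\<bar> < \<epsilon> \<and> \<phi> lam y = 0 \<longrightarrow> y = xp lam)) \<and>
           (\<lambda>lam. xp lam - (- D / A) * lam powr h) \<in> O[at_right 0](\<lambda>lam. \<bar>lam\<bar> powr (2 * h))"
proof -
  have Ap: "\<bar>A\<bar> > 0" using A by simp
  define \<epsilon> where "\<epsilon> = min 1 (\<bar>A\<bar> / (4 * (K1 + 1)))"
  have \<epsilon>p: "\<epsilon> > 0" "\<epsilon> \<le> 1" unfolding \<epsilon>_def using Ap K1 by auto
  have K1\<epsilon>: "K1 * \<epsilon> \<le> \<bar>A\<bar> / 4"
  proof -
    have "K1 * \<epsilon> \<le> (K1 + 1) * \<epsilon>" using \<epsilon>p by (simp add: algebra_simps)
    also have "\<dots> \<le> (K1 + 1) * (\<bar>A\<bar> / (4 * (K1 + 1)))"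
      using K1 by (intro mult_left_mono) (auto simp: \<epsilon>_def)
    also have "\<dots> = \<bar>A\<bar> / 4" using K1 by (simp add: field_simps)
    finally show ?thesis .
  qed
  obtain Cm' where Cm': "Cm \<le> Cm'" "0 \<le> Cm'" by (meson max.cobounded1 max.cobounded2)
  obtain Cc' where Cc': "Cc \<le> Cc'" "0 \<le> Cc'" by (meson max.cobounded1 max.cobounded2)
  define C\<phi> where "C\<phi> = \<bar>D\<bar> + Cc' + K0 * Cm'\<^sup>2"
  have C\<phi>0: "C\<phi> \<ge> 0" unfolding C\<phi>_def using K0 Cc' by auto
  define \<eta> where "\<eta> = min 1 (min (\<epsilon> / (Cm' + 1)) (\<bar>A\<bar> * \<epsilon> / (4 * (C\<phi> + 1))))"
  have \<eta>p: "\<eta> > 0" unfolding \<eta>_def using \<epsilon>p Ap C\<phi>0 Cm' by auto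
  have ev: "eventually (\<lambda>lam. lam powr h < \<eta> \<and> (0 \<le> m lam \<and> m lam \<le> Cm * lam powr h \<and>
                 \<bar>c lam - D * lam powr h\<bar> \<le> Cc * lam powr (2 * h))) (at_right 0)"
    using powr_small_ev[OF h \<eta>p] H5 by (rule eventually_conj)
  then obtain \<delta> where \<delta>: "\<delta> > 0" and \<delta>P: "\<And>lam. 0 < lam \<Longrightarrow> lam < \<delta> \<Longrightarrow> lam powr h < \<eta> \<and> 0 \<le> m lam \<and>
      m lam \<le> Cm * lam powr h \<and> \<bar>c lam - D * lam powr h\<bar> \<le> Cc * lam powr (2 * h)"
    unfolding eventually_at_right_field by auto
  have basic: "m lam \<le> \<epsilon> \<and> \<bar>\<phi> lam 0\<bar> \<le> C\<phi> * lam powr h \<and> C\<phi> * lam powr h < \<bar>A\<bar> * \<epsilon> / 4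
               \<and> m lam \<le> Cm' * lam powr h \<and> 0 \<le> m lam"
    if lam: "0 < lam" "lam < \<delta>" for lam
  proof -
    define P where "P = lam powr h"
    have P0: "P > 0" unfolding P_def using lam by simp
    have Pe: "P < \<eta>" and m0: "0 \<le> m lam" and mb: "m lam \<le> Cm * P"
      and cb: "\<bar>c lam - D * P\<bar> \<le> Cc * lam powr (2 * h)" using \<delta>P[OF lam] unfolding P_def by auto
    have P2: "lam powr (2 * h) = P * P" unfolding P_def using lam by (simp add: powr_add[symmetric])
    have P1: "P < 1" using Pe unfolding \<eta>_def by auto
    have PP: "P * P \<le> P" using P0 P1 by (simp add: mult_le_cancel_right1 less_imp_le)
    have mb': "m lam \<le> Cm' * P" using mb mult_right_mono[of Cm Cm' P] Cm' P0 by linarith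
    have "Cm' * P \<le> Cm' * \<eta>" using Pe Cm' by (intro mult_left_mono) auto
    also have "\<dots> \<le> (Cm' + 1) * \<eta>" using \<eta>p by (simp add: algebra_simps)
    finally have "Cm' * P \<le> (Cm' + 1) * \<eta>" .
    also have "\<dots> \<le> (Cm' + 1) * (\<epsilon> / (Cm' + 1))"
    proof (rule mult_left_mono)
      show "\<eta> \<le> \<epsilon> / (Cm' + 1)" unfolding \<eta>_def by linarith
      show "0 \<le> Cm' + 1" using Cm' by linarith
    qed
    also have "\<dots> = \<epsilon>" using Cm' by simp
    finally have me: "m lam \<le> \<epsilon>" using mb' by linarith
    have m1: "m lam \<le> 1" using me \<epsilon>p by linarith
    have "\<bar>\<phi> lam 0\<bar> \<le> \<bar>c lam\<bar> + K0 * (m lam)\<^sup>2" using H3[OF lam(1) m1] by linarith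
    also have "\<bar>c lam\<bar> \<le> \<bar>D\<bar> * P + Cc' * (P * P)"
    proof -
      have "\<bar>c lam\<bar> \<le> \<bar>D * P\<bar> + Cc * (P * P)" using cb[unfolded P2] by arith
      moreover have "Cc * (P * P) \<le> Cc' * (P * P)" using Cc' P0 by (intro mult_right_mono) auto
      moreover have "\<bar>D * P\<bar> = \<bar>D\<bar> * P" using P0 by (simp add: abs_mult)
      ultimately show ?thesis by linarith
    qed
    also have "K0 * (m lam)\<^sup>2 \<le> K0 * (Cm'\<^sup>2 * (P * P))"
    proof -
      have "(m lam)\<^sup>2 \<le> (Cm' * P)\<^sup>2" using m0 mb' by (intro power_mono) auto
      hence "(m lam)\<^sup>2 \<le> Cm'\<^sup>2 * (P * P)" by (simp add: power2_eq_square mult_ac)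
      thus ?thesis using K0 by (rule mult_left_mono)
    qed
    finally have "\<bar>\<phi> lam 0\<bar> \<le> \<bar>D\<bar> * P + (Cc' + K0 * Cm'\<^sup>2) * (P * P)" by (simp add: algebra_simps)
    also have "\<dots> \<le> \<bar>D\<bar> * P + (Cc' + K0 * Cm'\<^sup>2) * P"
      using PP Cc' K0 by (intro add_left_mono mult_left_mono) auto
    also have "\<dots> = C\<phi> * P" unfolding C\<phi>_def by (simp add: algebra_simps)
    finally have \<phi>0: "\<bar>\<phi> lam 0\<bar> \<le> C\<phi> * P" .
    have "C\<phi> * P \<le> C\<phi> * \<eta>" using Pe C\<phi>0 by (intro mult_left_mono) auto
    also have "\<dots> < (C\<phi> + 1) * \<eta>" using \<eta>p by simp
    also have "\<dots> \<le> (C\<phi> + 1) * (\<bar>A\<bar> * \<epsilon> / (4 * (C\<phi> + 1)))"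
      using C\<phi>0 unfolding \<eta>_def by (intro mult_left_mono) auto
    also have "\<dots> = \<bar>A\<bar> * \<epsilon> / 4" using C\<phi>0 by (simp add: field_simps)
    finally show ?thesis using me \<phi>0 mb' m0 unfolding P_def by auto
  qed
  have loc: "\<bar>\<phi> lam y1 - \<phi> lam y2 - A * (y1 - y2)\<bar> \<le> \<bar>A\<bar> / 4 * \<bar>y1 - y2\<bar>"
    if lam: "0 < lam" "lam < \<delta>" and y: "\<bar>y1\<bar> \<le> \<epsilon>" "\<bar>y2\<bar> \<le> \<epsilon>" for lam y1 y2
  proof -
    have "\<bar>\<phi> lam y1 - \<phi> lam y2 - A * (y1 - y2)\<bar> \<le> K1 * \<epsilon> * \<bar>y1 - y2\<bar>"
      using H2[OF lam(1) _ \<epsilon>p(2) y] basic[OF lam] by blast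
    also have "\<dots> \<le> \<bar>A\<bar> / 4 * \<bar>y1 - y2\<bar>" using K1\<epsilon> by (intro mult_right_mono) auto
    finally show ?thesis .
  qed
  have uniq: "y1 = y2" if lam: "0 < lam" "lam < \<delta>" and y: "\<bar>y1\<bar> \<le> \<epsilon>" "\<bar>y2\<bar> \<le> \<epsilon>"
    and z: "\<phi> lam y1 = 0" "\<phi> lam y2 = 0" for lam y1 y2
  proof (rule ccontr)
    assume ne: "y1 \<noteq> y2"
    have "\<bar>A * (y1 - y2)\<bar> \<le> \<bar>A\<bar> / 4 * \<bar>y1 - y2\<bar>" using loc[OF lam y] z by simp
    hence "\<bar>A\<bar> * \<bar>y1 - y2\<bar> \<le> \<bar>A\<bar> / 4 * \<bar>y1 - y2\<bar>" by (simp add: abs_mult)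
    moreover have "\<bar>A\<bar> / 4 * \<bar>y1 - y2\<bar> < \<bar>A\<bar> * \<bar>y1 - y2\<bar>" using Ap ne by simp
    ultimately show False by linarith
  qed
  have exist: "\<exists>y. \<bar>y\<bar> \<le> \<epsilon> / 2 \<and> \<phi> lam y = 0" if lam: "0 < lam" "lam < \<delta>" for lam
  proof -
    have e2: "\<bar>\<epsilon> / 2\<bar> \<le> \<epsilon>" "\<bar>- \<epsilon> / 2\<bar> \<le> \<epsilon>" "\<bar>0::real\<bar> \<le> \<epsilon>" using \<epsilon>p by auto
    have a1: "\<bar>\<phi> lam (\<epsilon>/2) - \<phi> lam 0 - A * (\<epsilon>/2)\<bar> \<le> \<bar>A\<bar> / 4 * (\<epsilon>/2)"
      using loc[OF lam e2(1) e2(3)] \<epsilon>p by simp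
    have a2: "\<bar>\<phi> lam (-\<epsilon>/2) - \<phi> lam 0 + A * (\<epsilon>/2)\<bar> \<le> \<bar>A\<bar> / 4 * (\<epsilon>/2)"
      using loc[OF lam e2(2) e2(3)] \<epsilon>p by simp
    have p0: "\<bar>\<phi> lam 0\<bar> < \<bar>A\<bar> * \<epsilon> / 4" using basic[OF lam] by linarith
    have cont: "continuous_on {-\<epsilon>/2 .. \<epsilon>/2} (\<phi> lam)" using H4[OF lam(1)] continuous_on_subset by blast
    have le: "-\<epsilon>/2 \<le> \<epsilon>/2" using \<epsilon>p by simp
    show ?thesis
    proof (cases "A > 0")
      case True
      hence "\<phi> lam (-\<epsilon>/2) \<le> 0" "0 \<le> \<phi> lam (\<epsilon>/2)" using a1 a2 p0 \<epsilon>p by (auto simp: abs_if split: if_splits)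
      then obtain y where "-\<epsilon>/2 \<le> y" "y \<le> \<epsilon>/2" "\<phi> lam y = 0" using IVT'[OF _ _ le cont] by blast
      thus ?thesis by (intro exI[of _ y]) auto
    next
      case False
      hence "A < 0" using A by simp
      hence "\<phi> lam (\<epsilon>/2) \<le> 0" "0 \<le> \<phi> lam (-\<epsilon>/2)" using a1 a2 p0 \<epsilon>p by (auto simp: abs_if split: if_splits)
      then obtain y where "-\<epsilon>/2 \<le> y" "y \<le> \<epsilon>/2" "\<phi> lam y = 0" using IVT2'[OF _ _ le cont] by blast
      thus ?thesis by (intro exI[of _ y]) auto
    qed
  qed
  define xp where "xp = (\<lambda>lam. SOME y. \<bar>y\<bar> < \<epsilon> \<and> \<phi> lam y = 0)"
  have xpP: "\<bar>xp lam\<bar> < \<epsilon> \<and> \<phi> lam (xp lam) = 0" if lam: "0 < lam" "lam < \<delta>" for lam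
  proof -
    obtain y where "\<bar>y\<bar> \<le> \<epsilon> / 2" "\<phi> lam y = 0" using exist[OF lam] by blast
    hence "\<bar>y\<bar> < \<epsilon> \<and> \<phi> lam y = 0" using \<epsilon>p by auto
    thus ?thesis unfolding xp_def by (rule someI)
  qed
  have part1: "\<forall>lam. 0 < lam \<and> lam < \<delta> \<longrightarrow> \<bar>xp lam\<bar> < \<epsilon> \<and> \<phi> lam (xp lam) = 0 \<and>
              (\<forall>y. \<bar>y\<bar> < \<epsilon> \<and> \<phi> lam y = 0 \<longrightarrow> y = xp lam)"
  proof (intro allI impI conjI)
    fix lam y assume lam: "0 < lam \<and> lam < \<delta>"
    show "\<bar>xp lam\<bar> < \<epsilon>" "\<phi> lam (xp lam) = 0" using xpP lam by auto
    assume "\<bar>y\<bar> < \<epsilon> \<and> \<phi> lam y = 0"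
    thus "y = xp lam" using uniq[of lam y "xp lam"] xpP[of lam] lam by auto
  qed
  define Cy where "Cy = 2 * C\<phi> / \<bar>A\<bar>"
  define Cf where "Cf = (K1 * (Cm' + Cy) * Cy + K0 * Cm'\<^sup>2 + Cc') / \<bar>A\<bar>"
  have part2: "(\<lambda>lam. xp lam - (- D / A) * lam powr h) \<in> O[at_right 0](\<lambda>lam. \<bar>lam\<bar> powr (2 * h))"
  proof (rule bigoI[where c=Cf])
    have "eventually (\<lambda>lam. 0 < lam \<and> lam < \<delta>) (at_right (0::real))"
      using \<delta> by (auto simp: eventually_at_right_field)
    thus "eventually (\<lambda>lam. norm (xp lam - (- D / A) * lam powr h) \<le> Cf * norm (\<bar>lam\<bar> powr (2 * h))) (at_right 0)"
    proof (rule eventually_mono)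
      fix lam :: real assume lam': "0 < lam \<and> lam < \<delta>"
      hence lam: "0 < lam" "lam < \<delta>" by auto
      define P where "P = lam powr h"
      define y where "y = xp lam"
      have P0: "P > 0" unfolding P_def using lam by simp
      have P2: "lam powr (2 * h) = P * P" unfolding P_def using lam by (simp add: powr_add[symmetric])
      have Pe: "P < \<eta>" and cb: "\<bar>c lam - D * P\<bar> \<le> Cc * (P * P)" using \<delta>P[OF lam] P2 unfolding P_def by auto
      have cb': "\<bar>c lam - D * P\<bar> \<le> Cc' * (P * P)"
        
      proof -
        have "Cc * (P * P) \<le> Cc' * (P * P)" by (rule mult_right_mono[OF Cc'(1)]) simp
        thus ?thesis using cb by linarith
      qed
      from basic[OF lam] have me: "m lam \<le> \<epsilon>" and \<phi>0: "\<bar>\<phi> lam 0\<bar> \<le> C\<phi> * P"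
        and mb: "m lam \<le> Cm' * P" and m0: "0 \<le> m lam" unfolding P_def by auto
      have y: "\<bar>y\<bar> < \<epsilon>" "\<phi> lam y = 0" using xpP[OF lam] unfolding y_def by auto
      have e0: "\<bar>0::real\<bar> \<le> \<epsilon>" using \<epsilon>p by simp
      have eqy: "\<bar>\<phi> lam y - \<phi> lam 0 - A * (y - 0)\<bar> = \<bar>A * y + \<phi> lam 0\<bar>" 
      proof -
        have "\<phi> lam y - \<phi> lam 0 - A * (y - 0) = -(A * y + \<phi> lam 0)" using y(2) by simp
        thus ?thesis by (simp only: abs_minus_cancel)
      qed
      have "\<bar>\<phi> lam y - \<phi> lam 0 - A * (y - 0)\<bar> \<le> \<bar>A\<bar> / 4 * \<bar>y - 0\<bar>"
        using loc[OF lam less_imp_le[OF y(1)] e0] by simp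
      hence "\<bar>A * y + \<phi> lam 0\<bar> \<le> \<bar>A\<bar> / 4 * \<bar>y\<bar>" unfolding eqy by simp
      moreover have "\<bar>A * y\<bar> \<le> \<bar>A * y + \<phi> lam 0\<bar> + \<bar>\<phi> lam 0\<bar>" by arith
      ultimately have "\<bar>A\<bar> * \<bar>y\<bar> \<le> \<bar>\<phi> lam 0\<bar> + \<bar>A\<bar> / 4 * \<bar>y\<bar>" unfolding abs_mult by linarith
      moreover have "\<bar>A\<bar> / 4 * \<bar>y\<bar> = (\<bar>A\<bar> * \<bar>y\<bar>) / 4" by simp
      moreover have "0 \<le> \<bar>\<phi> lam 0\<bar>" "0 \<le> \<bar>A\<bar> * \<bar>y\<bar>" by auto
      ultimately have "\<bar>A\<bar> * \<bar>y\<bar> \<le> 2 * \<bar>\<phi> lam 0\<bar>" by linarith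
      hence "\<bar>y\<bar> \<le> 2 * \<bar>\<phi> lam 0\<bar> / \<bar>A\<bar>" using Ap by (simp add: field_simps)
      also have "\<dots> \<le> 2 * (C\<phi> * P) / \<bar>A\<bar>" using \<phi>0 Ap by (intro divide_right_mono) auto
      finally have yb: "\<bar>y\<bar> \<le> Cy * P" unfolding Cy_def by simp
      have Cy0: "Cy \<ge> 0" unfolding Cy_def using C\<phi>0 by simp
      define \<rho> where "\<rho> = max (m lam) \<bar>y\<bar>"
      have \<rho>1: "\<rho> \<le> 1" unfolding \<rho>_def using me y \<epsilon>p by auto
      have \<rho>b: "\<rho> \<le> (Cm' + Cy) * P" unfolding \<rho>_def using mb yb Cm' Cy0 P0
        by (auto simp: algebra_simps intro: order_trans)
      have "\<bar>\<phi> lam y - \<phi> lam 0 - A * (y - 0)\<bar> \<le> K1 * \<rho> * \<bar>y - 0\<bar>"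
        by (rule H2[OF lam(1)]) (use \<rho>1 m0 in \<open>auto simp: \<rho>_def\<close>)
      hence "\<bar>A * y + \<phi> lam 0\<bar> \<le> K1 * \<rho> * \<bar>y\<bar>" unfolding eqy by simp
      also have "\<dots> \<le> K1 * ((Cm' + Cy) * P) * (Cy * P)"
        using K1 \<rho>b yb m0 by (intro mult_mono) (auto simp: \<rho>_def)
      finally have t1: "\<bar>A * y + \<phi> lam 0\<bar> \<le> K1 * (Cm' + Cy) * Cy * (P * P)" by (simp add: algebra_simps)
      have m1: "m lam \<le> 1" using me \<epsilon>p by linarith
      have t2: "\<bar>\<phi> lam 0 - c lam\<bar> \<le> K0 * Cm'\<^sup>2 * (P * P)"
      proof -
        have "(m lam)\<^sup>2 \<le> (Cm' * P)\<^sup>2" using m0 mb by (intro power_mono) auto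
        hence "K0 * (m lam)\<^sup>2 \<le> K0 * (Cm' * P)\<^sup>2" using K0 by (intro mult_left_mono) auto
        thus ?thesis using H3[OF lam(1) m1] by (simp add: power_mult_distrib power2_eq_square algebra_simps)
      qed
      have "\<bar>A * y + D * P\<bar> \<le> \<bar>A * y + \<phi> lam 0\<bar> + \<bar>\<phi> lam 0 - c lam\<bar> + \<bar>c lam - D * P\<bar>" by linarith
      also have "\<dots> \<le> (K1 * (Cm' + Cy) * Cy + K0 * Cm'\<^sup>2 + Cc') * (P * P)"
        using t1 t2 cb' by (simp add: algebra_simps)
      finally have t3: "\<bar>A * y + D * P\<bar> \<le> (K1 * (Cm' + Cy) * Cy + K0 * Cm'\<^sup>2 + Cc') * (P * P)" .
      have "y - (- D / A) * P = (A * y + D * P) / A" using A by (simp add: field_simps)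
      hence "\<bar>y - (- D / A) * P\<bar> = \<bar>A * y + D * P\<bar> / \<bar>A\<bar>" by simp
      also have "\<dots> \<le> (K1 * (Cm' + Cy) * Cy + K0 * Cm'\<^sup>2 + Cc') * (P * P) / \<bar>A\<bar>"
        using t3 Ap by (intro divide_right_mono) auto
      also have "\<dots> = Cf * (P * P)" unfolding Cf_def by simp
      finally show "norm (xp lam - (- D / A) * lam powr h) \<le> Cf * norm (\<bar>lam\<bar> powr (2 * h))"
        using lam P2 unfolding y_def P_def by simp
    qed
  qed
  show ?thesis using \<epsilon>p(1) \<delta> part1 part2 by blast
qed



lemma two_powr_pred: "2 powr (- (real n - 1)) = 2 * 2 powr (- real n)"
proof -
  have "- (real n - 1) = 1 + - real n" by simp
  hence "2 powr (- (real n - 1)) = 2 powr 1 * 2 powr (- real n)" by (simp only: powr_add)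
  thus ?thesis by simp
qed

lemma exp_bound:
  assumes "has_expansion x d \<xi>"
  shows "\<exists>C>0. eventually (\<lambda>lam. \<bar>x lam - d * lam powr (2 powr (- real \<xi>))\<bar>
            \<le> C * lam powr (2 * 2 powr (- real \<xi>))) (at_right 0)"
proof -
  from assms[unfolded has_expansion_def two_powr_pred] obtain C where C: "C > 0"
    "eventually (\<lambda>lam. norm (x lam - d * lam powr (2 powr (- real \<xi>)))
        \<le> C * norm (\<bar>lam\<bar> powr (2 * 2 powr (- real \<xi>)))) (at_right (0::real))"
    by (rule landau_o.bigE)
  have "eventually (\<lambda>lam::real. lam > 0) (at_right 0)" by (simp add: eventually_at_right_less)
  with C(2) have "eventually (\<lambda>lam. \<bar>x lam - d * lam powr (2 powr (- real \<xi>))\<bar>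
            \<le> C * lam powr (2 * 2 powr (- real \<xi>))) (at_right 0)"
    by eventually_elim simp
  thus ?thesis using C(1) by blast
qed

lemma neighbor_bound:
  fixes lam X d C :: real and hq h :: real
  assumes lam: "0 < lam" "lam < 1" and C: "C \<ge> 0" and hq: "0 < hq" and hh: "e \<le> hq"
    and b: "\<bar>X - d * lam powr hq\<bar> \<le> C * lam powr (2 * hq)"
  shows "\<bar>X\<bar> \<le> (\<bar>d\<bar> + C) * lam powr e"
proof -
  have p1: "lam powr (2 * hq) \<le> lam powr hq" using lam hq by (intro powr_mono') auto
  have p2: "lam powr hq \<le> lam powr e" using lam hh by (intro powr_mono') auto
  have "\<bar>X\<bar> \<le> \<bar>d * lam powr hq\<bar> + C * lam powr (2 * hq)" using b by linarith
  also have "\<bar>d * lam powr hq\<bar> = \<bar>d\<bar> * lam powr hq" by (simp add: abs_mult)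
  also have "\<bar>d\<bar> * lam powr hq \<le> \<bar>d\<bar> * lam powr e" using p2 by (intro mult_left_mono) auto
  also have "C * lam powr (2 * hq) \<le> C * lam powr e" using p1 p2 C by (intro mult_left_mono) auto
  finally show ?thesis by (simp add: algebra_simps)
qed



lemma sum_if_diff:
  fixes a :: "'s::finite \<Rightarrow> real"
  shows "(\<Sum>i\<in>UNIV. (if P i then y1 else z i) * a i) - (\<Sum>i\<in>UNIV. (if P i then y2 else z i) * a i)
       = (y1 - y2) * (\<Sum>i\<in>{i. P i}. a i)"
proof -
  have "(\<Sum>i\<in>UNIV. (if P i then y1 else z i) * a i) - (\<Sum>i\<in>UNIV. (if P i then y2 else z i) * a i)
      = (\<Sum>i\<in>UNIV. (if P i then y1 else z i) * a i - (if P i then y2 else z i) * a i)"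
    by (simp add: sum_subtractf)
  also have "\<dots> = (\<Sum>i\<in>UNIV. if i \<in> {i. P i} then (y1 - y2) * a i else 0)"
    by (intro sum.cong) (auto simp: algebra_simps)
  also have "\<dots> = (\<Sum>i\<in>UNIV \<inter> {i. P i}. (y1 - y2) * a i)"
    using sum.inter_restrict[of UNIV "\<lambda>i. (y1 - y2) * a i" "{i. P i}"] by simp
  also have "\<dots> = (y1 - y2) * (\<Sum>i\<in>{i. P i}. a i)" by (simp add: sum_distrib_left)
  finally show ?thesis .
qed

lemma sum_if_card:
  fixes P :: "'s::finite \<Rightarrow> bool"
  shows "(\<Sum>i\<in>UNIV. \<bar>if P i then (w::real) else 0\<bar>) = real (card {i. P i}) * \<bar>w\<bar>"
proof -
  have "(\<Sum>i\<in>UNIV. \<bar>if P i then (w::real) else 0\<bar>) = (\<Sum>i\<in>UNIV. if i \<in> {i. P i} then \<bar>w\<bar> else 0)"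
    by (intro sum.cong) auto
  also have "\<dots> = (\<Sum>i\<in>UNIV \<inter> {i. P i}. \<bar>w\<bar>)"
    using sum.inter_restrict[of UNIV "\<lambda>i. \<bar>w\<bar>" "{i. P i}"] by simp
  also have "\<dots> = real (card {i. P i}) * \<bar>w\<bar>" by simp
  finally show ?thesis .
qed



theorem lemma4p17:
  fixes sig :: "'s::finite \<Rightarrow> 'c::finite \<Rightarrow> 'c"
    and f :: "real^'s \<Rightarrow> real \<Rightarrow> real"
    and B :: "'c set" and p :: 'c
    and x :: "'c \<Rightarrow> real \<Rightarrow> real" and d :: "'c \<Rightarrow> real" and \<xi> :: "'c \<Rightarrow> nat"
  assumes net: "network sig" and ff: "feedforward sig"
    and smooth: "smooth_fun (\<lambda>z. f (fst z) (snd z))"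
    and B_assm: "assumption_B sig f"
    and max_noncrit: "\<forall>q. maximal sig q \<longrightarrow> \<not> critical sig f q"
    and root: "root_subnetwork sig f B"
    and pB: "p \<notin> B" and p_nonmax: "\<not> maximal sig p" and p_noncrit: "\<not> critical sig f p"
    and H: "hyp_H sig p x d \<xi>"
    and L: "Xi sig \<xi> p = 0 \<Longrightarrow> cond_L sig f d \<xi> p"
    and SN: "Xi sig \<xi> p > 0 \<Longrightarrow> cond_SN sig f d \<xi> p"
  shows "let dp = (if Xi sig \<xi> p = 0
                   then - ((\<Sum>t\<in>- Lp sig p. acoef f t * d (sig t p)) + lcoef f)
                          / (\<Sum>s\<in>Lp sig p. acoef f s)
                   else - (\<Sum>t\<in>{t. sig t p \<in> Qset sig \<xi> p}. acoef f t * d (sig t p))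
                          / (\<Sum>s\<in>Lp sig p. acoef f s))
         in dp \<noteq> 0 \<and>
            (\<exists>\<epsilon>>0. \<exists>\<delta>>0. \<exists>xp :: real \<Rightarrow> real.
               (\<forall>lam. 0 < lam \<and> lam < \<delta> \<longrightarrow>
                  \<bar>xp lam\<bar> < \<epsilon> \<and>
                  gamma sig f ((\<lambda>q. x q lam)(p := xp lam)) lam p = 0 \<and>
                  (\<forall>y. \<bar>y\<bar> < \<epsilon> \<and> gamma sig f ((\<lambda>q. x q lam)(p := y)) lam p = 0 \<longrightarrow> y = xp lam)) \<and>
               has_expansion xp dp (Xi sig \<xi> p))"
proof -
  define g where "g = (\<lambda>z::(real^'s) \<times> real. f (fst z) (snd z))"
  obtain K where K0: "K \<ge> 0" and K: "\<And>\<rho> u v. 0 \<le> \<rho> \<Longrightarrow> \<rho> \<le> 1 \<Longrightarrow> u \<in> boxS \<rho> \<Longrightarrow> v \<in> boxS \<rho> \<Longrightarrow>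
     \<bar>(g u - lin g u) - (g v - lin g v)\<bar> \<le> K * \<rho> * (\<Sum>b\<in>Basis. \<bar>u \<bullet> b - v \<bullet> b\<bar>)"
    using strong_diff[OF smooth[folded g_def]] by blast
  have linV: "lin g z = (\<Sum>i\<in>UNIV. fst z $ i * acoef f i) + snd z * lcoef f" for z
    unfolding g_def by (rule lin_V)
  have contg: "continuous_on UNIV g" using smooth unfolding smooth_fun_def g_def by blast
  have f00: "f 0 0 = 0" using B_assm unfolding assumption_B_def by blast
  define A where "A = (\<Sum>s\<in>Lp sig p. acoef f s)"
  have A: "A \<noteq> 0" using p_noncrit unfolding critical_def A_def by simp
  have LpE: "Lp sig p = {s. sig s p = p}" unfolding Lp_def by simp
  define \<Xi> where "\<Xi> = Xi sig \<xi> p"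
  define Q where "Q = Qset sig \<xi> p"
  define h where "h = 2 powr (- real \<Xi>)"
  have h0: "h > 0" unfolding h_def by simp
  define D where "D = (\<Sum>t\<in>{t. sig t p \<in> Q}. acoef f t * d (sig t p)) + (if \<Xi> = 0 then lcoef f else 0)"
  define u where "u = (\<lambda>lam y. ((\<chi> s. if sig s p = p then y else x (sig s p) lam), lam))"
  define \<phi> where "\<phi> = (\<lambda>lam y. g (u lam y))"
  define m where "m = (\<lambda>lam. \<bar>lam\<bar> + (\<Sum>s\<in>UNIV. if sig s p = p then 0 else \<bar>x (sig s p) lam\<bar>))"
  define c where "c = (\<lambda>lam. lin g (u lam 0))"
  define nL where "nL = real (card (Lp sig p))"
  have finSS: "finite (Sig_star sig p)" by simp
  have SSiff: "sig s p \<in> Sig_star sig p \<longleftrightarrow> sig s p \<noteq> p" for s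
    unfolding Sig_star_def Sig_img_def by auto
  have above_nb: "above sig (sig s p) p" if "sig s p \<noteq> p" for s
  proof -
    have "(sig s p, p) \<in> edges sig" using that unfolding edges_def by blast
    thus ?thesis using that unfolding above_def below_def by auto
  qed
  have xi_le: "\<xi> (sig s p) \<le> \<Xi>" if "sig s p \<noteq> p" for s
    unfolding \<Xi>_def Xi_def using SSiff[of s] that finSS by (intro Max_ge) auto
  have Qiff: "sig s p \<in> Q \<longleftrightarrow> sig s p \<noteq> p \<and> \<xi> (sig s p) = \<Xi>" for s
    unfolding Q_def Qset_def \<Xi>_def using SSiff[of s] by auto
  have gam: "gamma sig f ((\<lambda>q. x q lam)(p := y)) lam p = \<phi> lam y" for lam y
    unfolding gamma_def \<phi>_def g_def u_def by (simp add: fun_upd_def)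
  have m0: "0 \<le> m lam" for lam unfolding m_def by (intro add_nonneg_nonneg abs_ge_zero sum_nonneg) auto
  have mlam: "\<bar>lam\<bar> \<le> m lam" for lam unfolding m_def by (simp add: sum_nonneg)
  have mx: "\<bar>x (sig s p) lam\<bar> \<le> m lam" if "sig s p \<noteq> p" for s lam
  proof -
    have "\<bar>x (sig s p) lam\<bar> \<le> (\<Sum>s\<in>UNIV. if sig s p = p then 0 else \<bar>x (sig s p) lam\<bar>)"
      using member_le_sum[of s UNIV "\<lambda>s. if sig s p = p then 0 else \<bar>x (sig s p) lam\<bar>"] that by simp
    thus ?thesis unfolding m_def by simp
  qed
  have ubox: "u lam y \<in> boxS \<rho>" if "m lam \<le> \<rho>" "\<bar>y\<bar> \<le> \<rho>" for lam y \<rho>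
    unfolding boxS_V u_def using that mx mlam by (auto intro: order_trans)
  have H2: "\<bar>\<phi> lam y1 - \<phi> lam y2 - A * (y1 - y2)\<bar> \<le> (K * nL) * \<rho> * \<bar>y1 - y2\<bar>"
    if "0 < lam" "m lam \<le> \<rho>" "\<rho> \<le> 1" "\<bar>y1\<bar> \<le> \<rho>" "\<bar>y2\<bar> \<le> \<rho>" for lam \<rho> y1 y2
  proof -
    have r0: "0 \<le> \<rho>" using that(2) m0 order_trans by blast
    have b: "\<bar>(g (u lam y1) - lin g (u lam y1)) - (g (u lam y2) - lin g (u lam y2))\<bar>
        \<le> K * \<rho> * (\<Sum>b\<in>Basis. \<bar>u lam y1 \<bullet> b - u lam y2 \<bullet> b\<bar>)"
      using K[OF r0 that(3) ubox[OF that(2,4)] ubox[OF that(2,5)]] .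
    have l: "lin g (u lam y1) - lin g (u lam y2) = A * (y1 - y2)"
      unfolding linV u_def A_def LpE using sum_if_diff[of "\<lambda>i. sig i p = p" y1 "\<lambda>i. x (sig i p) lam" "acoef f" y2]
      by simp
    have s: "(\<Sum>b\<in>Basis. \<bar>u lam y1 \<bullet> b - u lam y2 \<bullet> b\<bar>) = nL * \<bar>y1 - y2\<bar>"
    proof -
      have "(\<Sum>b\<in>Basis. \<bar>u lam y1 \<bullet> b - u lam y2 \<bullet> b\<bar>) = (\<Sum>b\<in>Basis. \<bar>(u lam y1 - u lam y2) \<bullet> b\<bar>)"
        by (simp add: inner_diff_left)
      also have "\<dots> = (\<Sum>i\<in>UNIV. \<bar>fst (u lam y1 - u lam y2) $ i\<bar>) + \<bar>snd (u lam y1 - u lam y2)\<bar>"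
        by (rule sum_abs_V)
      also have "\<dots> = (\<Sum>i\<in>UNIV. \<bar>if sig i p = p then y1 - y2 else 0\<bar>)"
        unfolding u_def by (simp, intro sum.cong) auto
      also have "\<dots> = nL * \<bar>y1 - y2\<bar>" unfolding sum_if_card nL_def LpE by simp
      finally show ?thesis .
    qed
    have "\<phi> lam y1 - \<phi> lam y2 - A * (y1 - y2) = (g (u lam y1) - lin g (u lam y1)) - (g (u lam y2) - lin g (u lam y2))"
      unfolding \<phi>_def using l by simp
    thus ?thesis using b s by (simp add: mult.assoc mult.left_commute)
  qed
  have H3: "\<bar>\<phi> lam 0 - c lam\<bar> \<le> K * (m lam)\<^sup>2" if "0 < lam" "m lam \<le> 1" for lam
  proof -
    have z: "(0 :: (real^'s) \<times> real) \<in> boxS (m lam)" unfolding boxS_V using m0 by simp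
    have b: "\<bar>(g (u lam 0) - lin g (u lam 0)) - (g 0 - lin g 0)\<bar>
        \<le> K * m lam * (\<Sum>b\<in>Basis. \<bar>u lam 0 \<bullet> b - 0 \<bullet> b\<bar>)"
      using K[OF m0 that(2) ubox[of lam "m lam" 0] z] m0 by simp
    have g0: "g 0 = 0" unfolding g_def using f00 by simp
    have l0: "lin g 0 = 0" unfolding lin_def by simp
    have s: "(\<Sum>b\<in>Basis. \<bar>u lam 0 \<bullet> b - 0 \<bullet> b\<bar>) = m lam"
    proof -
      have "(\<Sum>b\<in>Basis. \<bar>u lam 0 \<bullet> b - 0 \<bullet> b\<bar>) = (\<Sum>b\<in>Basis. \<bar>u lam 0 \<bullet> b\<bar>)" by simp
      also have "\<dots> = (\<Sum>i\<in>UNIV. \<bar>fst (u lam 0) $ i\<bar>) + \<bar>snd (u lam 0)\<bar>" by (rule sum_abs_V)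
      also have "\<dots> = m lam" unfolding u_def m_def by (simp add: if_distrib cong: if_cong)
      finally show ?thesis .
    qed
    show ?thesis using b unfolding s g0 l0 \<phi>_def c_def by (simp add: power2_eq_square mult.assoc)
  qed
  have H4: "continuous_on UNIV (\<phi> lam)" for lam
  proof -
    define e where "e = ((\<chi> s. if sig s p = p then 1 else 0) :: real^'s, 0 :: real)"
    have ueq: "u lam y = u lam 0 + y *\<^sub>R e" for y
      unfolding u_def e_def by (simp add: vec_eq_iff)
    have cu0: "continuous_on UNIV (\<lambda>y. u lam 0 + y *\<^sub>R e)" by (intro continuous_intros)
    have cu: "continuous_on UNIV (\<lambda>y. u lam y)"
      by (rule continuous_on_eq[OF cu0]) (rule ueq[symmetric])
    show ?thesis unfolding \<phi>_def
      using continuous_on_compose2[OF contg cu] by simp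
  qed
  have H5: "\<exists>Cm Cc. eventually (\<lambda>lam. 0 \<le> m lam \<and> m lam \<le> Cm * lam powr h \<and>
                 \<bar>c lam - D * lam powr h\<bar> \<le> Cc * lam powr (2 * h)) (at_right 0)"
  proof -
    have ex: "\<exists>C>0. sig s p \<noteq> p \<longrightarrow> eventually (\<lambda>lam. \<bar>x (sig s p) lam - d (sig s p) * lam powr (2 powr (- real (\<xi> (sig s p))))\<bar>
            \<le> C * lam powr (2 * 2 powr (- real (\<xi> (sig s p))))) (at_right 0)" for s
    proof (cases "sig s p = p")
      case True thus ?thesis by (intro exI[of _ 1]) simp
    next
      case False
      hence "has_expansion (x (sig s p)) (d (sig s p)) (\<xi> (sig s p))"
        using H above_nb[OF False] unfolding hyp_H_def by blast
      thus ?thesis using exp_bound by blast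
    qed
    hence "\<exists>C. \<forall>s. C s > 0 \<and> (sig s p \<noteq> p \<longrightarrow> eventually (\<lambda>lam. \<bar>x (sig s p) lam - d (sig s p) * lam powr (2 powr (- real (\<xi> (sig s p))))\<bar>
            \<le> C s * lam powr (2 * 2 powr (- real (\<xi> (sig s p))))) (at_right 0))"
      by (intro choice allI) blast
    then obtain C where C: "\<And>s. C s > 0" and Cev: "\<And>s. sig s p \<noteq> p \<Longrightarrow> eventually (\<lambda>lam. \<bar>x (sig s p) lam - d (sig s p) * lam powr (2 powr (- real (\<xi> (sig s p))))\<bar>
            \<le> C s * lam powr (2 * 2 powr (- real (\<xi> (sig s p))))) (at_right 0)"
      by blast
    have evs: "eventually (\<lambda>lam. \<forall>s. sig s p \<noteq> p \<longrightarrow> \<bar>x (sig s p) lam - d (sig s p) * lam powr (2 powr (- real (\<xi> (sig s p))))\<bar>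
            \<le> C s * lam powr (2 * 2 powr (- real (\<xi> (sig s p))))) (at_right 0)"
    proof (rule eventually_all_finite)
      fix s show "eventually (\<lambda>lam. sig s p \<noteq> p \<longrightarrow> \<bar>x (sig s p) lam - d (sig s p) * lam powr (2 powr (- real (\<xi> (sig s p))))\<bar>
            \<le> C s * lam powr (2 * 2 powr (- real (\<xi> (sig s p))))) (at_right 0)"
        using Cev[of s] by (cases "sig s p = p") auto
    qed
    have ev01: "eventually (\<lambda>lam::real. 0 < lam \<and> lam < 1) (at_right 0)"
      by (auto simp: eventually_at_right_field intro: exI[of _ 1])
    define Cm where "Cm = 1 + (\<Sum>s\<in>UNIV. \<bar>d (sig s p)\<bar> + C s)"
    define Cc where "Cc = (\<Sum>s\<in>UNIV. \<bar>acoef f s\<bar> * (\<bar>d (sig s p)\<bar> + C s)) + \<bar>lcoef f\<bar>"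
    have h1: "h \<le> 1" unfolding h_def using powr_mono[of "- real \<Xi>" 0 2] by simp
    have hq: "h \<le> 2 powr (- real (\<xi> (sig s p)))" if "sig s p \<noteq> p" for s
      unfolding h_def using xi_le[OF that] by (intro powr_mono) auto
    have hq2: "2 * h \<le> 2 powr (- real (\<xi> (sig s p)))" if "sig s p \<noteq> p" "\<xi> (sig s p) \<noteq> \<Xi>" for s
    proof -
      have "\<xi> (sig s p) \<le> \<Xi> - 1" "\<Xi> \<ge> 1" using xi_le[OF that(1)] that(2) by auto
      hence "- (real \<Xi> - 1) \<le> - real (\<xi> (sig s p))" by simp
      hence "2 powr (- (real \<Xi> - 1)) \<le> 2 powr (- real (\<xi> (sig s p)))" by (intro powr_mono) auto
      thus ?thesis unfolding h_def two_powr_pred .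
    qed
    have "eventually (\<lambda>lam. 0 \<le> m lam \<and> m lam \<le> Cm * lam powr h \<and>
                 \<bar>c lam - D * lam powr h\<bar> \<le> Cc * lam powr (2 * h)) (at_right 0)"
      using evs ev01
    proof eventually_elim
      case (elim lam)
      have lam: "0 < lam" "lam < 1" using elim(2) by auto
      have bnd: "\<bar>x (sig s p) lam - d (sig s p) * lam powr (2 powr (- real (\<xi> (sig s p))))\<bar>
            \<le> C s * lam powr (2 * 2 powr (- real (\<xi> (sig s p))))" if "sig s p \<noteq> p" for s
        using elim(1) that by blast
      have Cnn: "C s \<ge> 0" for s using C[of s] by simp
      have xh: "\<bar>x (sig s p) lam\<bar> \<le> (\<bar>d (sig s p)\<bar> + C s) * lam powr h" if "sig s p \<noteq> p" for s
        by (rule neighbor_bound[OF lam Cnn _ hq[OF that] bnd[OF that]]) simp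
      have lamh: "lam \<le> lam powr h"
        using powr_mono'[of h 1 lam] h1 lam by simp
      have "(\<Sum>s\<in>UNIV. if sig s p = p then 0 else \<bar>x (sig s p) lam\<bar>) \<le> (\<Sum>s\<in>UNIV. (\<bar>d (sig s p)\<bar> + C s) * lam powr h)"
        using xh Cnn by (intro sum_mono) (auto intro!: mult_nonneg_nonneg)
      also have "\<dots> = (\<Sum>s\<in>UNIV. \<bar>d (sig s p)\<bar> + C s) * lam powr h" by (simp add: sum_distrib_right)
      finally have "m lam \<le> lam powr h + (\<Sum>s\<in>UNIV. \<bar>d (sig s p)\<bar> + C s) * lam powr h"
        unfolding m_def using lam lamh by simp
      hence mb: "m lam \<le> Cm * lam powr h" unfolding Cm_def by (simp add: algebra_simps)
      define T where "T = (\<lambda>s. (if sig s p = p then 0 else x (sig s p) lam * acoef f s)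
                         - (if sig s p \<in> Q then acoef f s * d (sig s p) * lam powr h else 0))"
      have Tb: "\<bar>T s\<bar> \<le> \<bar>acoef f s\<bar> * (\<bar>d (sig s p)\<bar> + C s) * lam powr (2 * h)" for s
      proof (cases "sig s p = p")
        case True
        hence "T s = 0" unfolding T_def using Qiff[of s] by simp
        thus ?thesis using Cnn[of s] by simp
      next
        case ne: False
        show ?thesis
        proof (cases "\<xi> (sig s p) = \<Xi>")
          case True
          hence inQ: "sig s p \<in> Q" using Qiff ne by simp
          have hq_eq: "2 powr (- real (\<xi> (sig s p))) = h" unfolding h_def True ..
          have "T s = acoef f s * (x (sig s p) lam - d (sig s p) * lam powr h)"
            unfolding T_def using ne inQ by (simp add: algebra_simps)
          hence "\<bar>T s\<bar> = \<bar>acoef f s\<bar> * \<bar>x (sig s p) lam - d (sig s p) * lam powr h\<bar>" by (simp add: abs_mult)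
          also have "\<dots> \<le> \<bar>acoef f s\<bar> * (C s * lam powr (2 * h))"
            using bnd[OF ne] unfolding hq_eq by (intro mult_left_mono) auto
          also have "\<dots> \<le> \<bar>acoef f s\<bar> * ((\<bar>d (sig s p)\<bar> + C s) * lam powr (2 * h))"
            by (intro mult_left_mono mult_right_mono) auto
          finally show ?thesis by (simp add: mult.assoc)
        next
          case False
          hence ninQ: "sig s p \<notin> Q" using Qiff by simp
          have xb: "\<bar>x (sig s p) lam\<bar> \<le> (\<bar>d (sig s p)\<bar> + C s) * lam powr (2 * h)"
            by (rule neighbor_bound[OF lam Cnn _ hq2[OF ne False] bnd[OF ne]]) simp
          have "\<bar>T s\<bar> = \<bar>acoef f s\<bar> * \<bar>x (sig s p) lam\<bar>" unfolding T_def using ne ninQ by (simp add: abs_mult)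
          also have "\<dots> \<le> \<bar>acoef f s\<bar> * ((\<bar>d (sig s p)\<bar> + C s) * lam powr (2 * h))"
            using xb by (intro mult_left_mono) auto
          finally show ?thesis by (simp add: mult.assoc)
        qed
      qed
      define R where "R = lam * lcoef f - (if \<Xi> = 0 then lcoef f * lam powr h else 0)"
      have Rb: "\<bar>R\<bar> \<le> \<bar>lcoef f\<bar> * lam powr (2 * h)"
      proof (cases "\<Xi> = 0")
        case True
        hence "h = 1" unfolding h_def by simp
        hence "R = 0" unfolding R_def using True lam by simp
        thus ?thesis by simp
      next
        case False
        have "2 * h \<le> 1"
        proof -
          have "2 * h = 2 powr (- (real \<Xi> - 1))" unfolding h_def two_powr_pred ..
          also have "\<dots> \<le> 1" using False powr_mono[of "- (real \<Xi> - 1)" 0 2] by simp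
          finally show ?thesis .
        qed
        hence "lam \<le> lam powr (2 * h)" using powr_mono'[of "2 * h" 1 lam] lam by simp
        moreover have "R = lam * lcoef f" unfolding R_def using False by simp
        ultimately have "\<bar>R\<bar> = \<bar>lcoef f\<bar> * lam" "lam \<le> lam powr (2 * h)" using lam by (auto simp: abs_mult)
        thus ?thesis by (simp add: mult_left_mono)
      qed
      have cD: "c lam - D * lam powr h = (\<Sum>s\<in>UNIV. T s) + R"
      proof -
        have c1: "c lam = (\<Sum>s\<in>UNIV. (if sig s p = p then 0 else x (sig s p) lam * acoef f s)) + lam * lcoef f"
          unfolding c_def linV u_def by (simp, intro sum.cong) auto
        have d1: "(\<Sum>t\<in>{t. sig t p \<in> Q}. acoef f t * d (sig t p)) * lam powr h
            = (\<Sum>s\<in>UNIV. if sig s p \<in> Q then acoef f s * d (sig s p) * lam powr h else 0)"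
          using sum.inter_restrict[of UNIV "\<lambda>s. acoef f s * d (sig s p) * lam powr h" "{t. sig t p \<in> Q}"]
          by (simp add: sum_distrib_right)
        have "D * lam powr h = (\<Sum>s\<in>UNIV. if sig s p \<in> Q then acoef f s * d (sig s p) * lam powr h else 0)
            + (if \<Xi> = 0 then lcoef f * lam powr h else 0)"
          unfolding D_def d1[symmetric] by (simp add: algebra_simps)
        thus ?thesis unfolding c1 T_def R_def by (simp add: sum_subtractf algebra_simps)
      qed
      have "\<bar>c lam - D * lam powr h\<bar> \<le> (\<Sum>s\<in>UNIV. \<bar>T s\<bar>) + \<bar>R\<bar>"
        unfolding cD using abs_triangle_ineq[of "\<Sum>s\<in>UNIV. T s" R] sum_abs[of T UNIV] by linarith
      also have "\<dots> \<le> (\<Sum>s\<in>UNIV. \<bar>acoef f s\<bar> * (\<bar>d (sig s p)\<bar> + C s) * lam powr (2 * h)) + \<bar>lcoef f\<bar> * lam powr (2 * h)"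
        using Tb Rb by (intro add_mono sum_mono) auto
      also have "\<dots> = Cc * lam powr (2 * h)"
      proof -
        have "(\<Sum>s\<in>UNIV. \<bar>acoef f s\<bar> * (\<bar>d (sig s p)\<bar> + C s) * lam powr (2 * h))
            = (\<Sum>s\<in>UNIV. \<bar>acoef f s\<bar> * (\<bar>d (sig s p)\<bar> + C s)) * lam powr (2 * h)"
          by (rule sum_distrib_right[symmetric])
        thus ?thesis unfolding Cc_def by (simp only: distrib_right)
      qed
      finally show ?case using m0 mb by blast
    qed
    thus ?thesis by blast
  qed
  then obtain Cm Cc where H5': "eventually (\<lambda>lam. 0 \<le> m lam \<and> m lam \<le> Cm * lam powr h \<and>
                 \<bar>c lam - D * lam powr h\<bar> \<le> Cc * lam powr (2 * h)) (at_right 0)" by blast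
  have K1: "K * nL \<ge> 0" using K0 unfolding nL_def by simp
  from core[OF A K1 K0 h0 H2 H3 H4 H5'] obtain \<epsilon> \<delta> xp where
    e: "\<epsilon> > 0" "\<delta> > 0" and P1: "\<forall>lam. 0 < lam \<and> lam < \<delta> \<longrightarrow> \<bar>xp lam\<bar> < \<epsilon> \<and> \<phi> lam (xp lam) = 0 \<and>
              (\<forall>y. \<bar>y\<bar> < \<epsilon> \<and> \<phi> lam y = 0 \<longrightarrow> y = xp lam)"
    and P2: "(\<lambda>lam. xp lam - (- D / A) * lam powr h) \<in> O[at_right 0](\<lambda>lam. \<bar>lam\<bar> powr (2 * h))"
    by blast
  define dp where "dp = (if Xi sig \<xi> p = 0
                   then - ((\<Sum>t\<in>- Lp sig p. acoef f t * d (sig t p)) + lcoef f)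
                          / (\<Sum>s\<in>Lp sig p. acoef f s)
                   else - (\<Sum>t\<in>{t. sig t p \<in> Qset sig \<xi> p}. acoef f t * d (sig t p))
                          / (\<Sum>s\<in>Lp sig p. acoef f s))"
  have dpD: "dp = - D / A \<and> D \<noteq> 0"
  proof (cases "\<Xi> = 0")
    case True
    have "{t. sig t p \<in> Q} = - Lp sig p" using Qiff True LpE xi_le by fastforce
    moreover have "(\<Sum>t\<in>- Lp sig p. acoef f t * d (sig t p)) + lcoef f \<noteq> 0"
      using L True unfolding \<Xi>_def cond_L_def by blast
    ultimately show ?thesis using True unfolding dp_def D_def A_def \<Xi>_def Q_def by simp
  next
    case False
    have "(\<Sum>t\<in>{t. sig t p \<in> Qset sig \<xi> p}. acoef f t * d (sig t p)) \<noteq> 0"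
      using SN False unfolding \<Xi>_def cond_SN_def by blast
    thus ?thesis using False unfolding dp_def D_def A_def \<Xi>_def Q_def by simp
  qed
  have dp0: "dp \<noteq> 0" using dpD A by simp
  have hexp: "has_expansion xp dp (Xi sig \<xi> p)"
    unfolding has_expansion_def two_powr_pred using P2 dpD unfolding h_def \<Xi>_def by simp
  have "dp \<noteq> 0 \<and>
            (\<exists>\<epsilon>>0. \<exists>\<delta>>0. \<exists>xp :: real \<Rightarrow> real.
               (\<forall>lam. 0 < lam \<and> lam < \<delta> \<longrightarrow>
                  \<bar>xp lam\<bar> < \<epsilon> \<and>
                  gamma sig f ((\<lambda>q. x q lam)(p := xp lam)) lam p = 0 \<and>
                  (\<forall>y. \<bar>y\<bar> < \<epsilon> \<and> gamma sig f ((\<lambda>q. x q lam)(p := y)) lam p = 0 \<longrightarrow> y = xp lam)) \<and>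
               has_expansion xp dp (Xi sig \<xi> p))"
    unfolding gam using dp0 e P1 hexp by blast
  thus ?thesis unfolding dp_def Let_def .
qed


end
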